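(* Let $X$ be a perfectly normal $T_1$ space. The following are equivalent: (1) $X$ is finite; (2) every maximal ideal of $B_1(X)$ is fixed; (3) every proper ideal of $B_1(X)$ is fixed.
   Context: For a topological space $X$, $B_1(X)$ denotes the ring (pointwise operations) of all Baire one functions $f:X\to\mathbb{R}$, i.e. pointwise limits of sequences of continuous real-valued functions. For $f$, $Z(f)=\{x: f(x)=0\}$. A proper ideal $I$ is fixed if $\bigcap_{f\in I}Z(f)\neq\emptyset$, and free otherwise. *)

theory Defs
  imports "HOL-Analysis.Analysis" "HOL-Algebra.Ideal"
begin

definition perfectly_normal_space :: "'a topology \<Rightarrow> bool" where
  "perfectly_normal_space X \<longleftrightarrow>
     normal_space X \<and> (\<forall>C. closedin X C \<longrightarrow> gdelta_in X C)"

text \<open>Functions are represented extensionally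
  (value 0 outside the topspace) so that each function X -> R has a unique representative.\<close>
definition baire_one :: "'a topology \<Rightarrow> ('a \<Rightarrow> real) set" where
  "baire_one X = {f. (\<forall>x. x \<notin> topspace X \<longrightarrow> f x = 0) \<and>
     (\<exists>g :: nat \<Rightarrow> 'a \<Rightarrow> real. (\<forall>n. continuous_map X euclideanreal (g n)) \<and>
        (\<forall>x\<in>topspace X. (\<lambda>n. g n x) \<longlonglongrightarrow> f x))}"

definition B1_ring :: "'a topology \<Rightarrow> ('a \<Rightarrow> real) ring" where
  "B1_ring X = \<lparr> carrier = baire_one X,
                 mult = (\<lambda>f g x. f x * g x),
                 one = (\<lambda>x. if x \<in> topspace X then 1 else 0),
                 zero = (\<lambda>x. 0),
                 add = (\<lambda>f g x. f x + g x) \<rparr>"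

definition zero_set :: "'a topology \<Rightarrow> ('a \<Rightarrow> real) \<Rightarrow> 'a set" where
  "zero_set X f = {x \<in> topspace X. f x = 0}"

definition fixed_ideal :: "'a topology \<Rightarrow> ('a \<Rightarrow> real) set \<Rightarrow> bool" where
  "fixed_ideal X I \<longleftrightarrow> topspace X \<inter> (\<Inter>f\<in>I. zero_set X f) \<noteq> {}"

end

theory Submission
  imports Defs
begin

lemma B1_add: assumes "f \<in> baire_one X" "g \<in> baire_one X"
  shows "(\<lambda>x. f x + g x) \<in> baire_one X"
proof -
  obtain a where a: "\<forall>n. continuous_map X euclideanreal (a n)" "\<forall>x\<in>topspace X. (\<lambda>n. a n x) \<longlonglongrightarrow> f x"
    using assms(1) unfolding baire_one_def by blast
  obtain b where b: "\<forall>n. continuous_map X euclideanreal (b n)" "\<forall>x\<in>topspace X. (\<lambda>n. b n x) \<longlonglongrightarrow> g x"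
    using assms(2) unfolding baire_one_def by blast
  show ?thesis unfolding baire_one_def
    using assms a b
    by (auto simp: baire_one_def intro!: exI[of _ "\<lambda>n x. a n x + b n x"] continuous_map_add tendsto_add)
qed

lemma B1_mult: assumes "f \<in> baire_one X" "g \<in> baire_one X"
  shows "(\<lambda>x. f x * g x) \<in> baire_one X"
proof -
  obtain a where a: "\<forall>n. continuous_map X euclideanreal (a n)" "\<forall>x\<in>topspace X. (\<lambda>n. a n x) \<longlonglongrightarrow> f x"
    using assms(1) unfolding baire_one_def by blast
  obtain b where b: "\<forall>n. continuous_map X euclideanreal (b n)" "\<forall>x\<in>topspace X. (\<lambda>n. b n x) \<longlonglongrightarrow> g x"
    using assms(2) unfolding baire_one_def by blast
  show ?thesis unfolding baire_one_def
    using assms a b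
    by (auto simp: baire_one_def intro!: exI[of _ "\<lambda>n x. a n x * b n x"] continuous_map_real_mult tendsto_mult)
qed

lemma B1_neg: assumes "f \<in> baire_one X"
  shows "(\<lambda>x. - f x) \<in> baire_one X"
proof -
  obtain a where a: "\<forall>n. continuous_map X euclideanreal (a n)" "\<forall>x\<in>topspace X. (\<lambda>n. a n x) \<longlonglongrightarrow> f x"
    using assms(1) unfolding baire_one_def by blast
  show ?thesis unfolding baire_one_def
    using assms a
    by (auto simp: baire_one_def intro!: exI[of _ "\<lambda>n x. - a n x"] continuous_map_minus tendsto_minus)
qed

lemma B1_zero: "(\<lambda>x. 0) \<in> baire_one X"
  unfolding baire_one_def by (auto intro!: exI[of _ "\<lambda>n x. 0"])

lemma B1_one: "(\<lambda>x. if x \<in> topspace X then 1 else 0) \<in> baire_one X"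
  unfolding baire_one_def by (auto intro!: exI[of _ "\<lambda>n x. 1"])

lemma B1_out: "f \<in> baire_one X \<Longrightarrow> x \<notin> topspace X \<Longrightarrow> f x = 0"
  unfolding baire_one_def by auto

lemma B1_cring: "cring (B1_ring X)"
proof (rule cringI)
  show "abelian_group (B1_ring X)"
    apply (rule abelian_groupI)
    apply (auto simp: B1_ring_def B1_add B1_zero)
    subgoal for x by (intro bexI[of _ "\<lambda>y. - x y"]) (auto simp: B1_neg)
    done
  show "comm_monoid (B1_ring X)"
    apply (rule comm_monoidI)
    apply (auto simp: B1_ring_def B1_mult B1_one fun_eq_iff B1_out)
    done
qed (auto simp: B1_ring_def fun_eq_iff algebra_simps)


lemma finite_fixed:
  assumes fin: "finite (topspace X)" and t1: "t1_space X"
    and I: "ideal I (B1_ring X)" and pr: "I \<noteq> carrier (B1_ring X)"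
  shows "fixed_ideal X I"
proof (rule ccontr)
  assume "\<not> fixed_ideal X I"
  then have "\<forall>x\<in>topspace X. \<exists>f\<in>I. f x \<noteq> 0"
    unfolding fixed_ideal_def zero_set_def by blast
  then obtain F where F: "\<And>x. x \<in> topspace X \<Longrightarrow> F x \<in> I \<and> F x x \<noteq> 0" by metis
  have Icar: "I \<subseteq> baire_one X"
    using additive_subgroup.a_subset[OF ideal.axioms(1)[OF I]] by (simp add: B1_ring_def)
  have "finite S \<Longrightarrow> S \<subseteq> topspace X \<Longrightarrow> \<exists>h\<in>I. (\<forall>y. h y \<ge> 0) \<and> (\<forall>y\<in>S. h y > 0)" for S
  proof (induction S rule: finite_induct)
    case empty
    have "(\<lambda>x. 0) \<in> I" using additive_subgroup.zero_closed[OF ideal.axioms(1)[OF I]]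
      by (simp add: B1_ring_def)
    then show ?case by auto
  next
    case (insert a S)
    then obtain h where h: "h \<in> I" "\<forall>y. h y \<ge> 0" "\<forall>y\<in>S. h y > 0" by auto
    have Fa: "F a \<in> I" "F a a \<noteq> 0" using F insert by auto
    have "F a \<otimes>\<^bsub>B1_ring X\<^esub> F a \<in> I"
      using ideal.I_l_closed[OF I Fa(1)] Fa Icar by (auto simp: B1_ring_def)
    then have "h \<oplus>\<^bsub>B1_ring X\<^esub> (F a \<otimes>\<^bsub>B1_ring X\<^esub> F a) \<in> I"
      using additive_subgroup.a_closed[OF ideal.axioms(1)[OF I]] h(1) by blast
    then have m: "(\<lambda>y. h y + F a y * F a y) \<in> I" by (simp add: B1_ring_def)
    show ?case
    proof (intro bexI[OF _ m] conjI ballI allI)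
      fix y show "0 \<le> h y + F a y * F a y" using h(2) by (simp add: add_nonneg_nonneg)
    next
      fix y assume "y \<in> insert a S"
      then show "0 < h y + F a y * F a y"
      proof
        assume "y = a" then show ?thesis using h(2) Fa(2) by (metis add_nonneg_pos not_real_square_gt_zero)
      next
        assume "y \<in> S" then show ?thesis using h(3) by (simp add: add_pos_nonneg)
      qed
    qed
  qed
  then obtain h where h: "h \<in> I" "\<forall>y\<in>topspace X. h y > 0" using fin by blast
  define k where "k = (\<lambda>y. if y \<in> topspace X then 1 / h y else 0)"
  have disc: "X = discrete_topology (topspace X)"
    using finite_t1_space_imp_discrete_topology fin t1 by blast
  have cont: "continuous_map X euclideanreal f" for f
    by (subst disc) (simp add: continuous_map_from_discrete_topology)
  have kB: "k \<in> baire_one X" unfolding baire_one_def k_def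
    by (auto intro!: exI[of _ "\<lambda>n. k"] cont simp: k_def)
  have "k \<otimes>\<^bsub>B1_ring X\<^esub> h \<in> I" using ideal.I_l_closed[OF I h(1)] kB by (simp add: B1_ring_def)
  moreover have "k \<otimes>\<^bsub>B1_ring X\<^esub> h = \<one>\<^bsub>B1_ring X\<^esub>"
    using h(2) by (auto simp: B1_ring_def k_def fun_eq_iff)
  ultimately have "\<one>\<^bsub>B1_ring X\<^esub> \<in> I" by simp
  then show False using ideal.one_imp_carrier[OF I] pr by blast
qed


lemma (in ring) krull:
  assumes "ideal I R" "I \<noteq> carrier R"
  shows "\<exists>M. maximalideal M R \<and> I \<subseteq> M"
proof -
  define A where "A = {J. ideal J R \<and> \<one> \<notin> J \<and> I \<subseteq> J}"
  have IA: "I \<in> A" using assms ideal.one_imp_carrier unfolding A_def by blast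
  have "\<forall>C\<in>chains A. \<exists>U\<in>A. \<forall>X\<in>C. X \<subseteq> U"
  proof
    fix C assume C: "C \<in> chains A"
    show "\<exists>U\<in>A. \<forall>X\<in>C. X \<subseteq> U"
    proof (cases "C = {}")
      case True then show ?thesis using IA by auto
    next
      case False
      have CA: "C \<subseteq> A" and ch: "\<And>J K. J \<in> C \<Longrightarrow> K \<in> C \<Longrightarrow> J \<subseteq> K \<or> K \<subseteq> J"
        using C unfolding chains_def chain_subset_def by auto
      have idC: "\<And>J. J \<in> C \<Longrightarrow> ideal J R" using CA unfolding A_def by auto
      have "ideal (\<Union>C) R"
      proof (rule idealI)
        show "ring R" by (rule ring_axioms)
        show "subgroup (\<Union>C) (add_monoid R)"
        proof (rule add.subgroupI)
          show "\<Union>C \<subseteq> carrier R"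
          proof
            fix a assume "a \<in> \<Union>C"
            then obtain J where J: "J \<in> C" "a \<in> J" by auto
            show "a \<in> carrier R" using additive_subgroup.a_subset[OF ideal.axioms(1)[OF idC[OF J(1)]]] J(2) by blast
          qed
          obtain J where J: "J \<in> C" using False by auto
          have "\<zero> \<in> J" using additive_subgroup.zero_closed[OF ideal.axioms(1)[OF idC[OF J]]] .
          then show "\<Union>C \<noteq> {}" using J by blast
          fix a assume "a \<in> \<Union>C"
          then obtain J where J: "J \<in> C" "a \<in> J" by auto
          have "\<ominus> a \<in> J" using additive_subgroup.a_inv_closed[OF ideal.axioms(1)[OF idC[OF J(1)]] J(2)] .
          then show "\<ominus> a \<in> \<Union>C" using J(1) by blast
        next
          fix a b assume "a \<in> \<Union>C" "b \<in> \<Union>C"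
          then obtain J K where JK: "J \<in> C" "a \<in> J" "K \<in> C" "b \<in> K" by auto
          obtain L where L: "L \<in> C" "a \<in> L" "b \<in> L" using ch[OF JK(1) JK(3)] JK by blast
          have "a \<oplus> b \<in> L" using additive_subgroup.a_closed[OF ideal.axioms(1)[OF idC[OF L(1)]] L(2) L(3)] .
          then show "a \<oplus> b \<in> \<Union>C" using L(1) by blast
        qed
      next
        fix a x assume "a \<in> \<Union>C" "x \<in> carrier R"
        then obtain J where J: "J \<in> C" "a \<in> J" "x \<in> carrier R" by auto
        show "x \<otimes> a \<in> \<Union>C" using ideal.I_l_closed[OF idC[OF J(1)] J(2) J(3)] J(1) by blast
        show "a \<otimes> x \<in> \<Union>C" using ideal.I_r_closed[OF idC[OF J(1)] J(2) J(3)] J(1) by blast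
      qed
      moreover have "\<one> \<notin> \<Union>C" "I \<subseteq> \<Union>C" using CA False unfolding A_def by auto
      ultimately show ?thesis unfolding A_def by blast
    qed
  qed
  from Zorn_Lemma2[OF this] obtain M where M: "M \<in> A" "\<And>X. X \<in> A \<Longrightarrow> M \<subseteq> X \<Longrightarrow> X = M"
    by blast
  have "maximalideal M R"
  proof (rule maximalidealI)
    show "ideal M R" using M unfolding A_def by auto
    show "carrier R \<noteq> M" using M unfolding A_def by auto
    fix J assume J: "ideal J R" "M \<subseteq> J" "J \<subseteq> carrier R"
    show "J = M \<or> J = carrier R"
    proof (cases "\<one> \<in> J")
      case True then show ?thesis using J ideal.one_imp_carrier by blast
    next
      case False then have "J \<in> A" using J M unfolding A_def by auto
      then show ?thesis using M J by blast
    qed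
  qed
  then show ?thesis using M unfolding A_def by auto
qed


lemma indicator_B1:
  assumes pn: "perfectly_normal_space X" and t1: "t1_space X" and x: "x \<in> topspace X"
  shows "(\<lambda>y. if y = x then 1 else 0) \<in> baire_one X"
proof -
  have "closedin X {x}" using iffD1[OF t1_space_closedin_singleton t1] x by blast
  then have "gdelta_in X {x}" using pn unfolding perfectly_normal_space_def by blast
  then obtain C where C: "\<And>n. openin X (C n)" "\<And>n. C (Suc n) \<subseteq> C n" "\<Inter>(range C) = {x}"
    using iffD1[OF gdelta_in_descending \<open>gdelta_in X {x}\<close>] by blast
  have norm: "normal_space X" using pn unfolding perfectly_normal_space_def by blast
  have xC: "\<And>n. x \<in> C n"
  proof -
    fix n have "x \<in> \<Inter>(range C)" using C(3) by simp
    then show "x \<in> C n" by simp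
  qed
  have "\<forall>n. \<exists>g. continuous_map X euclideanreal g \<and> g ` {x} \<subseteq> {1} \<and> g ` (topspace X - C n) \<subseteq> {0}"
  proof
    fix n
    have cl: "closedin X (topspace X - C n)" using closedin_diff[OF closedin_topspace C(1)] .
    have dj: "disjnt {x} (topspace X - C n)" using xC[of n] by (simp add: disjnt_def)
    obtain g where "continuous_map X euclideanreal g" "g ` {x} \<subseteq> {1::real}" "g ` (topspace X - C n) \<subseteq> {0}"
      using Urysohn_lemma_alt[OF norm \<open>closedin X {x}\<close> cl dj, where a=1 and b=0] by blast
    then show "\<exists>g. continuous_map X euclideanreal g \<and> g ` {x} \<subseteq> {1} \<and> g ` (topspace X - C n) \<subseteq> {0}"
      by blast
  qed
  then obtain g where g0: "\<forall>n. continuous_map X euclideanreal (g n) \<and> g n ` {x} \<subseteq> {1} \<and> g n ` (topspace X - C n) \<subseteq> {0}"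
    by metis
  have g: "\<And>n. continuous_map X euclideanreal (g n)" "\<And>n. g n x = 1"
     "\<And>n y. y \<in> topspace X \<Longrightarrow> y \<notin> C n \<Longrightarrow> g n y = 0"
    using g0 by blast+
  have dec: "\<And>m n. m \<le> n \<Longrightarrow> C n \<subseteq> C m"
    using C(2) by (metis lift_Suc_antimono_le)
  have lim: "(\<lambda>n. g n y) \<longlonglongrightarrow> (if y = x then 1 else 0)" if y: "y \<in> topspace X" for y
  proof (cases "y = x")
    case True then show ?thesis using g(2) by simp
  next
    case False
    then have "y \<notin> \<Inter>(range C)" using C(3) by simp
    then obtain N where "y \<notin> C N" by auto
    then have "\<forall>n\<ge>N. g n y = 0" using dec g(3) y by (meson subsetD)
    then have "eventually (\<lambda>n. g n y = 0) sequentially" using eventually_sequentially by blast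
    then have "(\<lambda>n. g n y) \<longlonglongrightarrow> 0" by (rule tendsto_eventually)
    then show ?thesis using False by simp
  qed
  show ?thesis unfolding baire_one_def
  proof (intro CollectI conjI allI impI exI[of _ g] ballI)
    fix y assume "y \<notin> topspace X" then show "(if y = x then 1 else 0) = (0::real)" using x by auto
  qed (use g(1) lim in auto)
qed



lemma B1_support_ideal:
  assumes inf: "infinite (topspace X)"
  shows "ideal {f \<in> baire_one X. finite {x. f x \<noteq> 0}} (B1_ring X)"
    (is "ideal ?I ?R")
proof -
  interpret R: cring ?R by (rule B1_cring)
  have neg: "\<ominus>\<^bsub>?R\<^esub> f = (\<lambda>x. - f x)" if "f \<in> baire_one X" for f
    by (rule R.minus_equality) (auto simp: B1_ring_def that B1_neg)
  show ?thesis
  proof (rule idealI)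
    show "ring ?R" by (rule R.ring_axioms)
    show "subgroup ?I (add_monoid ?R)"
    proof (rule R.add.subgroupI)
      show "?I \<subseteq> carrier ?R" by (auto simp: B1_ring_def)
      show "?I \<noteq> {}" using B1_zero[of X] by auto
      fix a assume a: "a \<in> ?I"
      then show "\<ominus>\<^bsub>?R\<^esub> a \<in> ?I" using neg[of a] B1_neg[of a X] by auto
    next
      fix a b assume a: "a \<in> ?I" and b: "b \<in> ?I"
      have "{x. a x + b x \<noteq> 0} \<subseteq> {x. a x \<noteq> 0} \<union> {x. b x \<noteq> 0}" by auto
      then have "finite {x. a x + b x \<noteq> 0}" using a b finite_subset by auto
      then show "a \<oplus>\<^bsub>?R\<^esub> b \<in> ?I" using a b B1_add[of a X b] by (simp add: B1_ring_def)
    qed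
  next
    fix a x assume a: "a \<in> ?I" and x: "x \<in> carrier ?R"
    have "{y. x y * a y \<noteq> 0} \<subseteq> {y. a y \<noteq> 0}" by auto
    then have f1: "finite {y. x y * a y \<noteq> 0}" using a finite_subset by auto
    have "{y. a y * x y \<noteq> 0} \<subseteq> {y. a y \<noteq> 0}" by auto
    then have f2: "finite {y. a y * x y \<noteq> 0}" using a finite_subset by auto
    show "x \<otimes>\<^bsub>?R\<^esub> a \<in> ?I" "a \<otimes>\<^bsub>?R\<^esub> x \<in> ?I"
      using a x f1 f2 B1_mult[of x X a] B1_mult[of a X x] by (auto simp: B1_ring_def)
  qed
qed

theorem theorem3p9:
  fixes X :: "'a topology"
  assumes "perfectly_normal_space X" and "t1_space X"
  shows "(finite (topspace X) \<longleftrightarrow>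
            (\<forall>I. maximalideal I (B1_ring X) \<longrightarrow> fixed_ideal X I))
       \<and> ((\<forall>I. maximalideal I (B1_ring X) \<longrightarrow> fixed_ideal X I) \<longleftrightarrow>
            (\<forall>I. ideal I (B1_ring X) \<and> I \<noteq> carrier (B1_ring X) \<longrightarrow> fixed_ideal X I))"
proof -
  interpret R: cring "B1_ring X" by (rule B1_cring)
  have max_prop: "ideal I (B1_ring X) \<and> I \<noteq> carrier (B1_ring X)" if "maximalideal I (B1_ring X)" for I
    using that maximalideal.axioms(1) maximalideal.I_notcarr by metis
  have A1: "finite (topspace X) \<Longrightarrow> (\<forall>I. ideal I (B1_ring X) \<and> I \<noteq> carrier (B1_ring X) \<longrightarrow> fixed_ideal X I)"
    using finite_fixed assms(2) by blast
  have A2: "finite (topspace X)" if H: "\<forall>I. maximalideal I (B1_ring X) \<longrightarrow> fixed_ideal X I"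
  proof (rule ccontr)
    assume inf: "infinite (topspace X)"
    define I0 where "I0 = {f \<in> baire_one X. finite {x. f x \<noteq> 0}}"
    have idI0: "ideal I0 (B1_ring X)" unfolding I0_def using B1_support_ideal[OF inf] .
    have "{x. (if x \<in> topspace X then 1 else 0::real) \<noteq> 0} = topspace X" by auto
    then have "\<one>\<^bsub>B1_ring X\<^esub> \<notin> I0" using inf by (simp add: I0_def B1_ring_def)
    then have "I0 \<noteq> carrier (B1_ring X)" using R.one_closed by blast
    then obtain M where M: "maximalideal M (B1_ring X)" "I0 \<subseteq> M" using R.krull[OF idI0] by blast
    have "fixed_ideal X M" using H M by blast
    then obtain x where x: "x \<in> topspace X" "\<forall>f\<in>M. x \<in> zero_set X f"
      unfolding fixed_ideal_def by blast
    define d where "d = (\<lambda>y. if y = x then 1 else 0::real)"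
    have "d \<in> baire_one X" unfolding d_def by (rule indicator_B1[OF assms x(1)])
    moreover have "{y. d y \<noteq> 0} = {x}" by (auto simp: d_def)
    ultimately have "d \<in> I0" unfolding I0_def by simp
    then have "d \<in> M" using M(2) by blast
    then have "x \<in> zero_set X d" using x(2) by blast
    then show False by (simp add: zero_set_def d_def)
  qed
  show ?thesis
    using A1 A2 max_prop by blast
qed

end
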